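(* Let $\mathbf{A}\in V(\mathsf{BCA})$. Then: (1) $\mathbf{A}\models J_2x\approx x$ if and only if the $\{\wedge,\vee,\neg,0,1\}$-reduct of $\mathbf{A}$ is a Boolean algebra; (2) $\mathbf{A}\models J_2x\approx 1$ if and only if the $\{\wedge,\vee,\neg,0,1\}$-reduct of $\mathbf{A}$ is a semilattice (with zero). Here a semilattice means an involutive bisemilattice satisfying $x\vee y\approx x\wedge y$, equivalently $\neg x\approx x$, equivalently $0\approx 1$.
   Context: $\mathbf{WK}^e$ is the three-element algebra on $\{0,\tfrac12,1\}$ of type $\langle\wedge,\vee,\neg,J_2,0,1\rangle$. Its operations are: - $\neg$ swaps $0,1$ and fixes $\tfrac12$; - $\wedge,\vee$ are Boolean on $\{0,1\}$ and return $\tfrac12$ if some argument is $\tfrac12$; - $J_2(1)=1$ and $J_2(\tfrac12)=J_2(0)=0$. $\mathsf{BCA}=ISP(\mathbf{WK}^e)$ and $V(\mathsf{BCA})=HSP(\mathbf{WK}^e)$. An involutive bisemilattice is an algebra $\langle A,\wedge,\vee,\neg,0,1\rangle$ satisfying: - $x\vee x\approx x$; - $x\vee y\approx y\vee x$; - $x\vee(y\vee z)\approx(x\vee y)\vee z$; - $\neg\neg x\approx x$; - $x\wedge y\approx\neg(\neg x\vee\neg y)$; - $x\wedge(\neg x\vee y)\approx x\wedge y$; - $0\vee x\approx x$; - $1\approx\neg 0$. The $\{\wedge,\vee,\neg,0,1\}$-reduct of every member of $V(\mathsf{BCA})$ is an involutive bisemilattice. *)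

theory Defs
  imports Main
begin

record 'a alg =
  carrier :: "'a set"
  meet :: "'a \<Rightarrow> 'a \<Rightarrow> 'a"
  join :: "'a \<Rightarrow> 'a \<Rightarrow> 'a"
  neg  :: "'a \<Rightarrow> 'a"
  J2   :: "'a \<Rightarrow> 'a"
  zero :: "'a"
  one  :: "'a"

datatype wk = W0 | Wh | W1   (* W0 = 0, Wh = 1/2, W1 = 1 *)

fun wk_neg :: "wk \<Rightarrow> wk" where
  "wk_neg W0 = W1" | "wk_neg Wh = Wh" | "wk_neg W1 = W0"

fun wk_meet :: "wk \<Rightarrow> wk \<Rightarrow> wk" where
  "wk_meet Wh _ = Wh" | "wk_meet _ Wh = Wh"
| "wk_meet W1 W1 = W1" | "wk_meet _ _ = W0"

fun wk_join :: "wk \<Rightarrow> wk \<Rightarrow> wk" where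
  "wk_join Wh _ = Wh" | "wk_join _ Wh = Wh"
| "wk_join W0 W0 = W0" | "wk_join _ _ = W1"

fun wk_J2 :: "wk \<Rightarrow> wk" where
  "wk_J2 W1 = W1" | "wk_J2 Wh = W0" | "wk_J2 W0 = W0"

definition WKe :: "wk alg" where
  "WKe = \<lparr>carrier = UNIV, meet = wk_meet, join = wk_join, neg = wk_neg,
          J2 = wk_J2, zero = W0, one = W1\<rparr>"

section \<open>Membership in V(BCA) = HSP(WK^e)\<close>

definition subuniv_power :: "('i \<Rightarrow> wk) set \<Rightarrow> bool" where
  "subuniv_power S \<longleftrightarrow>
     (\<lambda>_. W0) \<in> S \<and> (\<lambda>_. W1) \<in> S \<and>
     (\<forall>f\<in>S. \<forall>g\<in>S. (\<lambda>i. wk_meet (f i) (g i)) \<in> S \<and> (\<lambda>i. wk_join (f i) (g i)) \<in> S) \<and>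
     (\<forall>f\<in>S. (\<lambda>i. wk_neg (f i)) \<in> S \<and> (\<lambda>i. wk_J2 (f i)) \<in> S)"

definition onto_hom :: "('i \<Rightarrow> wk) set \<Rightarrow> (('i \<Rightarrow> wk) \<Rightarrow> 'a) \<Rightarrow> 'a alg \<Rightarrow> bool" where
  "onto_hom S h A \<longleftrightarrow>
     h ` S = carrier A \<and>
     h (\<lambda>_. W0) = zero A \<and> h (\<lambda>_. W1) = one A \<and>
     (\<forall>f\<in>S. \<forall>g\<in>S. h (\<lambda>i. wk_meet (f i) (g i)) = meet A (h f) (h g) \<and>
                     h (\<lambda>i. wk_join (f i) (g i)) = join A (h f) (h g)) \<and>
     (\<forall>f\<in>S. h (\<lambda>i. wk_neg (f i)) = neg A (h f) \<and> h (\<lambda>i. wk_J2 (f i)) = J2 A (h f))"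

definition in_V_BCA :: "'i itself \<Rightarrow> 'a alg \<Rightarrow> bool" where
  "in_V_BCA _ A \<longleftrightarrow> (\<exists>(S :: ('i \<Rightarrow> wk) set) h. subuniv_power S \<and> onto_hom S h A)"

definition boolean_algebra_reduct :: "'a alg \<Rightarrow> bool" where
  "boolean_algebra_reduct A \<longleftrightarrow>
    (let C = carrier A; m = meet A; j = join A; n = neg A; z = zero A; u = one A in
     z \<in> C \<and> u \<in> C \<and>
     (\<forall>x\<in>C. \<forall>y\<in>C. m x y \<in> C \<and> j x y \<in> C) \<and> (\<forall>x\<in>C. n x \<in> C) \<and>
     (\<forall>x\<in>C. \<forall>y\<in>C. m x y = m y x \<and> j x y = j y x) \<and>
     (\<forall>x\<in>C. \<forall>y\<in>C. \<forall>w\<in>C. m x (m y w) = m (m x y) w \<and> j x (j y w) = j (j x y) w) \<and>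
     (\<forall>x\<in>C. \<forall>y\<in>C. m x (j x y) = x \<and> j x (m x y) = x) \<and>
     (\<forall>x\<in>C. \<forall>y\<in>C. \<forall>w\<in>C. m x (j y w) = j (m x y) (m x w)) \<and>
     (\<forall>x\<in>C. m x (n x) = z \<and> j x (n x) = u))"

definition involutive_bisemilattice :: "'a alg \<Rightarrow> bool" where
  "involutive_bisemilattice A \<longleftrightarrow>
    (let C = carrier A; m = meet A; j = join A; n = neg A; z = zero A; u = one A in
     z \<in> C \<and> u \<in> C \<and>
     (\<forall>x\<in>C. \<forall>y\<in>C. m x y \<in> C \<and> j x y \<in> C) \<and> (\<forall>x\<in>C. n x \<in> C) \<and>
     (\<forall>x\<in>C. j x x = x) \<and>
     (\<forall>x\<in>C. \<forall>y\<in>C. j x y = j y x) \<and>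
     (\<forall>x\<in>C. \<forall>y\<in>C. \<forall>w\<in>C. j x (j y w) = j (j x y) w) \<and>
     (\<forall>x\<in>C. n (n x) = x) \<and>
     (\<forall>x\<in>C. \<forall>y\<in>C. m x y = n (j (n x) (n y))) \<and>
     (\<forall>x\<in>C. \<forall>y\<in>C. m x (j (n x) y) = m x y) \<and>
     (\<forall>x\<in>C. j z x = x) \<and>
     u = n z)"

definition semilattice_reduct :: "'a alg \<Rightarrow> bool" where
  "semilattice_reduct A \<longleftrightarrow> involutive_bisemilattice A \<and>
     (\<forall>x\<in>carrier A. \<forall>y\<in>carrier A. join A x y = meet A x y)"

end

theory Submission
  imports Defs
begin

lemma wk_meet_c: "wk_meet a b = (case a of Wh \<Rightarrow> Wh | W0 \<Rightarrow> (case b of Wh \<Rightarrow> Wh | _ \<Rightarrow> W0) | W1 \<Rightarrow> b)"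
  by (cases a; cases b; simp)
lemma wk_join_c: "wk_join a b = (case a of Wh \<Rightarrow> Wh | W1 \<Rightarrow> (case b of Wh \<Rightarrow> Wh | _ \<Rightarrow> W1) | W0 \<Rightarrow> b)"
  by (cases a; cases b; simp)
lemma wk_neg_c: "wk_neg a = (case a of Wh \<Rightarrow> Wh | W1 \<Rightarrow> W0 | W0 \<Rightarrow> W1)"
  by (cases a; simp)
lemma wk_J2_c: "wk_J2 a = (case a of W1 \<Rightarrow> W1 | _ \<Rightarrow> W0)"
  by (cases a; simp)

lemma wk_J2_if: "wk_J2 a = (if a = W1 then W1 else W0)"
  by (cases a; simp)

lemmas wkc = wk_meet_c wk_join_c wk_neg_c wk_J2_c

lemma ba_abs: "boolean_algebra_reduct A \<Longrightarrow> x\<in>carrier A \<Longrightarrow> y \<in> carrier A \<Longrightarrow> meet A x (join A x y) = x"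
  unfolding boolean_algebra_reduct_def Let_def
  by (elim conjE) blast
lemma sl: "semilattice_reduct A \<Longrightarrow> x\<in>carrier A \<Longrightarrow> y \<in> carrier A \<Longrightarrow> join A x y = meet A x y"
  unfolding semilattice_reduct_def by blast
lemma sl2: "involutive_bisemilattice A \<Longrightarrow> \<forall>x\<in>carrier A. \<forall>y\<in>carrier A. join A x y = meet A x y \<Longrightarrow> semilattice_reduct A"
  unfolding semilattice_reduct_def by blast

locale hsp =
  fixes S :: "('i \<Rightarrow> wk) set" and h :: "('i \<Rightarrow> wk) \<Rightarrow> 'a" and A :: "'a alg"
  assumes su: "subuniv_power S" and oh: "onto_hom S h A"
begin

lemma cl:
  "(\<lambda>_. W0) \<in> S" "(\<lambda>_. W1) \<in> S"
  "f \<in> S \<Longrightarrow> g \<in> S \<Longrightarrow> (\<lambda>i. wk_meet (f i) (g i)) \<in> S"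
  "f \<in> S \<Longrightarrow> g \<in> S \<Longrightarrow> (\<lambda>i. wk_join (f i) (g i)) \<in> S"
  "f \<in> S \<Longrightarrow> (\<lambda>i. wk_neg (f i)) \<in> S"
  "f \<in> S \<Longrightarrow> (\<lambda>i. wk_J2 (f i)) \<in> S"
  using su unfolding subuniv_power_def by auto

lemma hm:
  "zero A = h (\<lambda>_. W0)" "one A = h (\<lambda>_. W1)"
  "f \<in> S \<Longrightarrow> g \<in> S \<Longrightarrow> meet A (h f) (h g) = h (\<lambda>i. wk_meet (f i) (g i))"
  "f \<in> S \<Longrightarrow> g \<in> S \<Longrightarrow> join A (h f) (h g) = h (\<lambda>i. wk_join (f i) (g i))"
  "f \<in> S \<Longrightarrow> neg A (h f) = h (\<lambda>i. wk_neg (f i))"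
  "f \<in> S \<Longrightarrow> J2 A (h f) = h (\<lambda>i. wk_J2 (f i))"
  using oh unfolding onto_hom_def by auto

lemma carr: "carrier A = h ` S"
  using oh unfolding onto_hom_def by auto

lemma hcong: "(\<And>i. F i = G i) \<Longrightarrow> h F = h G"
  by (rule arg_cong[where f=h]) (rule ext)

lemma ibs: "involutive_bisemilattice A"
  unfolding involutive_bisemilattice_def Let_def carr
  apply (simp add: hm cl)
  apply (intro conjI ballI; (rule image_eqI)?; (rule hcong)?)
  apply (simp_all add: hm cl wkc split: wk.split)
  done


lemma idents:
  assumes "x \<in> carrier A" "y \<in> carrier A"
  shows "meet A (J2 A x) x = x" "join A (J2 A x) x = x"
    "meet A x y = meet A (meet A (join A x y) (J2 A x)) (J2 A y)"
    "meet A x (one A) = x" "join A (zero A) (one A) = one A"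
    "meet A (zero A) (one A) = zero A" "meet A (J2 A x) (zero A) = zero A"
    "J2 A x \<in> carrier A" "join A x y \<in> carrier A" "zero A \<in> carrier A" "one A \<in> carrier A"
proof -
  obtain f g where f: "f \<in> S" "x = h f" and g: "g \<in> S" "y = h g"
    using assms carr by auto
  show "meet A (J2 A x) x = x" using f(1) g(1) unfolding f(2) g(2)
    apply (simp add: hm cl)
    apply ((rule hcong; simp add: wkc split: wk.split)?)
    done
  show "join A (J2 A x) x = x" using f(1) g(1) unfolding f(2) g(2)
    apply (simp add: hm cl)
    apply ((rule hcong; simp add: wkc split: wk.split)?)
    done
  show "meet A x y = meet A (meet A (join A x y) (J2 A x)) (J2 A y)" using f(1) g(1) unfolding f(2) g(2)
    apply (simp add: hm cl)
    apply ((rule hcong; simp add: wkc split: wk.split)?)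
    done
  show "meet A x (one A) = x" using f(1) g(1) unfolding f(2) g(2)
    apply (simp add: hm cl)
    apply ((rule hcong; simp add: wkc split: wk.split)?)
    done
  show "join A (zero A) (one A) = one A" using f(1) g(1) unfolding f(2) g(2)
    apply (simp add: hm cl)
    apply ((rule hcong; simp add: wkc split: wk.split)?)
    done
  show "meet A (zero A) (one A) = zero A" using f(1) g(1) unfolding f(2) g(2)
    apply (simp add: hm cl)
    apply ((rule hcong; simp add: wkc split: wk.split)?)
    done
  show "meet A (J2 A x) (zero A) = zero A" using f(1) g(1) unfolding f(2) g(2)
    apply (simp add: hm cl)
    apply ((rule hcong; simp add: wkc split: wk.split)?)
    done
  show "J2 A x \<in> carrier A" unfolding f(2) carr using f(1) by (simp add: hm cl)
  show "join A x y \<in> carrier A" unfolding f(2) g(2) carr using f(1) g(1) by (simp add: hm cl)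
  show "zero A \<in> carrier A" "one A \<in> carrier A" unfolding carr by (simp_all add: hm cl)
qed

lemma J2rep:
  assumes "\<forall>x\<in>carrier A. J2 A x = x"
  shows "carrier A = (\<lambda>f. h (\<lambda>i. wk_J2 (f i))) ` S"
proof
  show "carrier A \<subseteq> (\<lambda>f. h (\<lambda>i. wk_J2 (f i))) ` S"
  proof
    fix x assume "x \<in> carrier A"
    then obtain f where f: "f \<in> S" "x = h f" using carr by auto
    then have "x = J2 A (h f)" using assms \<open>x \<in> carrier A\<close> by simp
    then show "x \<in> (\<lambda>f. h (\<lambda>i. wk_J2 (f i))) ` S" using f by (simp add: hm)
  qed
  show "(\<lambda>f. h (\<lambda>i. wk_J2 (f i))) ` S \<subseteq> carrier A" using carr cl by auto
qed

lemma ba: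
  assumes "\<forall>x\<in>carrier A. J2 A x = x"
  shows "boolean_algebra_reduct A"
proof -
  let ?C = "carrier A" and ?m = "meet A" and ?j = "join A" and ?n = "neg A"
  have e0: "(\<forall>x\<in>?C. \<forall>y\<in>?C. ?m x y = ?m y x \<and> ?j x y = ?j y x)"
    unfolding J2rep[OF assms]
    apply (simp add: hm cl)
    apply (intro conjI ballI; rule hcong)
    apply (simp_all add: wk_J2_if)
    done
  have e1: "(\<forall>x\<in>?C. \<forall>y\<in>?C. \<forall>w\<in>?C. ?m x (?m y w) = ?m (?m x y) w \<and> ?j x (?j y w) = ?j (?j x y) w)"
    unfolding J2rep[OF assms]
    apply (simp add: hm cl)
    apply (intro conjI ballI; rule hcong)
    apply (simp_all add: wk_J2_if)
    done
  have e2: "(\<forall>x\<in>?C. \<forall>y\<in>?C. ?m x (?j x y) = x \<and> ?j x (?m x y) = x)"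
    unfolding J2rep[OF assms]
    apply (simp add: hm cl)
    apply (intro conjI ballI; rule hcong)
    apply (simp_all add: wk_J2_if)
    done
  have e3: "(\<forall>x\<in>?C. \<forall>y\<in>?C. \<forall>w\<in>?C. ?m x (?j y w) = ?j (?m x y) (?m x w))"
    unfolding J2rep[OF assms]
    apply (simp add: hm cl)
    apply (intro conjI ballI; rule hcong)
    apply (simp_all add: wk_J2_if)
    done
  have e4: "(\<forall>x\<in>?C. ?m x (?n x) = zero A \<and> ?j x (?n x) = one A)"
    unfolding J2rep[OF assms]
    apply (simp add: hm cl)
    apply (intro conjI ballI; rule hcong)
    apply (simp_all add: wk_J2_if)
    done
  have c1: "zero A \<in> ?C" "one A \<in> ?C" unfolding carr by (simp_all add: hm cl)
  have c2: "\<forall>x\<in>?C. \<forall>y\<in>?C. ?m x y \<in> ?C \<and> ?j x y \<in> ?C" unfolding carr by (auto simp add: hm cl)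
  have c3: "\<forall>x\<in>?C. ?n x \<in> ?C" unfolding carr by (auto simp add: hm cl)
  show ?thesis unfolding boolean_algebra_reduct_def Let_def
    by (intro conjI; rule c1 c2 c3 e0 e1 e2 e3 e4)
qed

end

theorem lemma4p9:
  fixes A :: "'a alg"
  assumes "in_V_BCA TYPE('i) A"
  shows "((\<forall>x\<in>carrier A. J2 A x = x) \<longleftrightarrow> boolean_algebra_reduct A)
       \<and> ((\<forall>x\<in>carrier A. J2 A x = one A) \<longleftrightarrow> semilattice_reduct A)"
proof -
  obtain S :: "('i \<Rightarrow> wk) set" and h where "subuniv_power S" "onto_hom S h A"
    using assms unfolding in_V_BCA_def by blast
  then interpret hsp S h A by unfold_locales
  have 1: "(\<forall>x\<in>carrier A. J2 A x = x) \<longleftrightarrow> boolean_algebra_reduct A"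
  proof
    assume "\<forall>x\<in>carrier A. J2 A x = x" then show "boolean_algebra_reduct A" by (rule ba)
  next
    assume B: "boolean_algebra_reduct A"
    show "\<forall>x\<in>carrier A. J2 A x = x"
    proof
      fix x assume x: "x \<in> carrier A"
      have "J2 A x = meet A (J2 A x) (join A (J2 A x) x)"
        using ba_abs[OF B idents(8)[OF x x] x] by simp
      also have "\<dots> = x" using idents(1,2)[OF x x] by simp
      finally show "J2 A x = x" .
    qed
  qed
  have 2: "(\<forall>x\<in>carrier A. J2 A x = one A) \<longleftrightarrow> semilattice_reduct A"
  proof
    assume J: "\<forall>x\<in>carrier A. J2 A x = one A"
    have "\<forall>x\<in>carrier A. \<forall>y\<in>carrier A. join A x y = meet A x y"
    proof (intro ballI)
      fix x y assume x: "x \<in> carrier A" and y: "y \<in> carrier A"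
      have jc: "join A x y \<in> carrier A" using idents(9)[OF x y] .
      have "meet A x y = meet A (meet A (join A x y) (one A)) (one A)"
      proof -
        have e: "J2 A x = one A" "J2 A y = one A" using J x y by auto
        from idents(3)[OF x y] show ?thesis by (simp only: e)
      qed
      also have "\<dots> = join A x y" using idents(4)[OF jc jc] by simp
      finally show "join A x y = meet A x y" by simp
    qed
    then show "semilattice_reduct A" using ibs sl2 by blast
  next
    assume L: "semilattice_reduct A"
    have zc: "zero A \<in> carrier A" "one A \<in> carrier A" using carr hm cl by auto
    have "one A = join A (zero A) (one A)" using idents(5)[OF zc(1) zc(1)] by simp
    also have "\<dots> = meet A (zero A) (one A)" using sl[OF L zc] .
    also have "\<dots> = zero A" using idents(6)[OF zc(1) zc(1)] by simp
    finally have zo: "one A = zero A" .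
    show "\<forall>x\<in>carrier A. J2 A x = one A"
    proof
      fix x assume x: "x \<in> carrier A"
      have "J2 A x = meet A (J2 A x) (one A)" using idents(4)[OF idents(8)[OF x x] x] by simp
      also have "\<dots> = zero A" using idents(7)[OF x x] zo by simp
      finally show "J2 A x = one A" using zo by simp
    qed
  qed
  show ?thesis using 1 2 by blast
qed

end
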